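(* Let $q\in L_1[0,\pi]$ with $C_0=0$ and suppose $q\in E$, i.e. $C_n=O(1/n)$ as $n\to\infty$. Then $S_j(n,q)=O(1/n)$ as $n\to\infty$ for $j=2,3,4$, where \[ S_2(n,q)=\sum_{\substack{k,l\in\mathbb{Z}\\k,\,k+l\neq0,-2n}}\frac{C_kC_lC_{-k-l}}{(2n+k)(k+l)},\quad S_3(n,q)=\sum_{\substack{k,l\in\mathbb{Z}\\k,\,k+l\neq0,-2n}}\frac{C_kC_lC_{-k-l}}{k(2n+k+l)},\quad S_4(n,q)=\sum_{\substack{k,l\in\mathbb{Z}\\k,\,k+l\neq0,-2n}}\frac{C_kC_lC_{-k-l}}{(2n+k)(2n+k+l)}. \]
   Context: $q$ is a complex-valued summable function on $[0,\pi]$; $C_k=\frac{1}{\pi}\int_0^\pi q(x)\cos kx\,dx$ for $k\in\mathbb{Z}$ (so $C_{-k}=C_k$), and it is assumed that $C_0=0$. $E$ is the set of such $q$ with $C_n=O(1/n)$. $n$ is a positive integer. *)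

theory Defs
  imports "HOL-Analysis.Analysis" "HOL-Library.Landau_Symbols"
begin

definition cosC :: "(real \<Rightarrow> complex) \<Rightarrow> int \<Rightarrow> complex" where
  "cosC q k = complex_of_real (1 / pi) *
     integral {0..pi} (\<lambda>x. q x * complex_of_real (cos (real_of_int k * x)))"

definition Sidx :: "nat \<Rightarrow> (int \<times> int) set" where
  "Sidx n = {(k, l). k \<noteq> 0 \<and> k \<noteq> - 2 * int n \<and> k + l \<noteq> 0 \<and> k + l \<noteq> - 2 * int n}"

definition S2_term :: "(real \<Rightarrow> complex) \<Rightarrow> nat \<Rightarrow> int \<times> int \<Rightarrow> complex" where
  "S2_term q n = (\<lambda>(k, l). cosC q k * cosC q l * cosC q (- k - l) /
      (of_int (2 * int n + k) * of_int (k + l)))"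

definition S3_term :: "(real \<Rightarrow> complex) \<Rightarrow> nat \<Rightarrow> int \<times> int \<Rightarrow> complex" where
  "S3_term q n = (\<lambda>(k, l). cosC q k * cosC q l * cosC q (- k - l) /
      (of_int k * of_int (2 * int n + k + l)))"

definition S4_term :: "(real \<Rightarrow> complex) \<Rightarrow> nat \<Rightarrow> int \<times> int \<Rightarrow> complex" where
  "S4_term q n = (\<lambda>(k, l). cosC q k * cosC q l * cosC q (- k - l) /
      (of_int (2 * int n + k) * of_int (2 * int n + k + l)))"

definition S2 :: "(real \<Rightarrow> complex) \<Rightarrow> nat \<Rightarrow> complex" where
  "S2 q n = infsum (S2_term q n) (Sidx n)"
definition S3 :: "(real \<Rightarrow> complex) \<Rightarrow> nat \<Rightarrow> complex" where
  "S3 q n = infsum (S3_term q n) (Sidx n)"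
definition S4 :: "(real \<Rightarrow> complex) \<Rightarrow> nat \<Rightarrow> complex" where
  "S4 q n = infsum (S4_term q n) (Sidx n)"

end

theory Submission
  imports Defs
begin

definition ir :: "int \<Rightarrow> real" where "ir a = inverse \<bar>real_of_int a\<bar>"

lemma ir_nonneg[simp]: "0 \<le> ir a" by (simp add: ir_def)

lemma ir_uminus[simp]: "ir (- a) = ir a" by (simp add: ir_def)

lemma ir_amgm: "ir a * ir b \<le> (ir a ^ 2 + ir b ^ 2) / 2"
proof -
  have "0 \<le> (ir a - ir b) ^ 2" by simp
  then show ?thesis by (simp add: power2_eq_square algebra_simps)
qed

lemma ir_pf:
  assumes "N > 0"
  shows "ir k * ir (N + k) \<le> (ir k + ir (N + k)) / real_of_int N"
proof (cases "k = 0 \<or> N + k = 0")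
  case True
  then have "ir k * ir (N + k) = 0" by (auto simp: ir_def)
  moreover have "0 \<le> (ir k + ir (N + k)) / real_of_int N" using assms by (simp add: divide_nonneg_pos)
  ultimately show ?thesis by linarith
next
  case False
  then have k: "real_of_int k \<noteq> 0" and nk: "real_of_int N + real_of_int k \<noteq> 0" by auto
  have "real_of_int N = \<bar>(real_of_int N + real_of_int k) - real_of_int k\<bar>" using assms by simp
  also have "\<dots> \<le> \<bar>real_of_int N + real_of_int k\<bar> + \<bar>real_of_int k\<bar>" by (rule abs_triangle_ineq4)
  finally have h: "real_of_int N \<le> \<bar>real_of_int N + real_of_int k\<bar> + \<bar>real_of_int k\<bar>" .
  have "ir k * ir (N + k) * real_of_int N \<le> ir k * ir (N + k) * (\<bar>real_of_int N + real_of_int k\<bar> + \<bar>real_of_int k\<bar>)"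
    using h by (intro mult_left_mono) auto
  also have "\<dots> = ir k + ir (N + k)" using k nk by (simp add: ir_def field_simps)
  finally show ?thesis using assms by (simp add: field_simps)
qed

lemma norm_div_int: "norm (z / (of_int a * of_int b :: complex)) = norm z * ir a * ir b"
  by (simp add: ir_def norm_divide norm_mult divide_inverse inverse_mult_distrib norm_inverse
      flip: of_int_abs)

definition pw :: "(int \<times> int \<Rightarrow> int \<times> int) \<Rightarrow> int \<times> int \<Rightarrow> real" where
  "pw \<phi> p = ir (fst (\<phi> p)) ^ 2 * ir (snd (\<phi> p)) ^ 2"

lemma w_summable: "(\<lambda>a. ir a ^ 2) summable_on UNIV"
proof -
  have s: "(\<lambda>n::nat. inverse (real n ^ 2)) summable_on UNIV"
    by (subst summable_on_UNIV_nonneg_real_iff) (auto intro: inverse_power_summable)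
  have e: "((\<lambda>a. ir a ^ 2) \<circ> int) = (\<lambda>n::nat. inverse (real n ^ 2))"
    by (auto simp: ir_def power_inverse)
  have e2: "((\<lambda>a. ir a ^ 2) \<circ> (\<lambda>n. - int n)) = (\<lambda>n::nat. inverse (real n ^ 2))"
    by (auto simp: ir_def power_inverse)
  have 1: "(\<lambda>a. ir a ^ 2) summable_on range int"
    by (subst summable_on_reindex) (auto simp: e s)
  have 2: "(\<lambda>a. ir a ^ 2) summable_on range (\<lambda>n. - int n)"
    by (subst summable_on_reindex) (auto simp: e2 s inj_on_def)
  have U: "range int \<union> range (\<lambda>n. - int n) = UNIV"
  proof -
    have "x \<in> range int \<union> range (\<lambda>n. - int n)" for x :: int
    proof (cases "x \<ge> 0")
      case True then show ?thesis by (auto intro: image_eqI[of _ _ "nat x"])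
    next
      case False then have "x = - int (nat (-x))" by simp
      then show ?thesis by blast
    qed
    then show ?thesis by blast
  qed
  show ?thesis using summable_on_union[OF 1 2] U by simp
qed

lemma prod_summable: "(\<lambda>(a, b). ir a ^ 2 * ir b ^ 2) summable_on (UNIV :: (int \<times> int) set)"
proof -
  define W where "W = infsum (\<lambda>a. ir a ^ 2) UNIV"
  have hW: "((\<lambda>a. ir a ^ 2) has_sum W) UNIV" unfolding W_def using w_summable by (rule has_sum_infsum)
  have "(\<lambda>(a, b). ir a ^ 2 * ir b ^ 2) summable_on Sigma UNIV (\<lambda>_. (UNIV :: int set))"
  proof (rule summable_on_SigmaI[where g = "\<lambda>a. ir a ^ 2 * W"])
    show "((\<lambda>y. case (x, y) of (a, b) \<Rightarrow> ir a ^ 2 * ir b ^ 2) has_sum ir x ^ 2 * W) UNIV" for x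
      using has_sum_cmult_right[OF hW, of "ir x ^ 2"] by simp
    show "(\<lambda>a. ir a ^ 2 * W) summable_on UNIV"
      using summable_on_cmult_left[OF w_summable] by simp
  qed auto
  then show ?thesis by simp
qed

lemma pw_bij:
  assumes "bij \<phi>"
  shows "pw \<phi> summable_on UNIV \<and> infsum (pw \<phi>) UNIV = infsum (\<lambda>(a, b). ir a ^ 2 * ir b ^ 2) (UNIV :: (int \<times> int) set)"
proof -
  have e: "pw \<phi> = (\<lambda>p. (\<lambda>(a, b). ir a ^ 2 * ir b ^ 2) (\<phi> p))"
    by (auto simp: pw_def fun_eq_iff split: prod.splits)
  show ?thesis unfolding e
    using summable_on_reindex_bij_betw[OF assms, of "\<lambda>(a, b). ir a ^ 2 * ir b ^ 2"]
      infsum_reindex_bij_betw[OF assms, of "\<lambda>(a, b). ir a ^ 2 * ir b ^ 2"] prod_summable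
    by simp
qed

lemma pw_list:
  assumes "\<forall>\<phi>\<in>set \<Phi>. bij \<phi>"
  shows "(\<lambda>p. \<Sum>\<phi>\<leftarrow>\<Phi>. pw \<phi> p) summable_on UNIV \<and>
    infsum (\<lambda>p. \<Sum>\<phi>\<leftarrow>\<Phi>. pw \<phi> p) UNIV = real (length \<Phi>) * infsum (\<lambda>(a, b). ir a ^ 2 * ir b ^ 2) (UNIV :: (int \<times> int) set)"
  using assms
proof (induction \<Phi>)
  case Nil then show ?case by simp
next
  case (Cons \<phi> \<Phi>)
  then have IH: "(\<lambda>p. \<Sum>\<phi>\<leftarrow>\<Phi>. pw \<phi> p) summable_on UNIV"
    "infsum (\<lambda>p. \<Sum>\<phi>\<leftarrow>\<Phi>. pw \<phi> p) UNIV = real (length \<Phi>) * infsum (\<lambda>(a, b). ir a ^ 2 * ir b ^ 2) (UNIV :: (int \<times> int) set)"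
    by auto
  have b: "bij \<phi>" using Cons.prems by simp
  note pb = pw_bij[OF b]
  show ?case
    using summable_on_add[OF conjunct1[OF pb] IH(1)] infsum_add[OF conjunct1[OF pb] IH(1)] IH(2) pb
    by (simp add: algebra_simps)
qed

lemma pw_nonneg: "0 \<le> pw \<phi> p" by (simp add: pw_def)

lemma gen_bound:
  fixes f :: "int \<times> int \<Rightarrow> complex"
  assumes "\<And>p. norm (f p) \<le> c * G p" "G summable_on UNIV" "c \<ge> 0" "\<And>p. G p \<ge> 0"
  shows "f summable_on A \<and> norm (infsum f A) \<le> c * infsum G UNIV"
proof -
  have cG: "(\<lambda>p. c * G p) summable_on UNIV" using summable_on_cmult_right[OF assms(2)] .
  have "(\<lambda>p. norm (f p)) summable_on UNIV"
    by (rule summable_on_comparison_test[OF cG]) (use assms(1) in auto)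
  then have fa: "(\<lambda>p. norm (f p)) summable_on A" by (rule summable_on_subset) auto
  have "norm (infsum f A) \<le> infsum (\<lambda>p. norm (f p)) A" by (rule norm_infsum_bound[OF fa])
  also have "\<dots> \<le> infsum (\<lambda>p. c * G p) UNIV"
    by (rule infsum_mono_neutral[OF fa cG]) (use assms in auto)
  also have "\<dots> = c * infsum G UNIV" by (simp add: infsum_cmult_right')
  finally show ?thesis using abs_summable_summable[OF fa] by simp
qed



lemma amgm: "2 * ((a::real) * b) \<le> a ^ 2 + b ^ 2"
proof -
  have "0 \<le> (a - b) ^ 2" by simp
  then show ?thesis by (simp add: power2_eq_square algebra_simps)
qed

lemma R2:
  fixes x y z u M Nr :: real
  assumes nn: "0 \<le> x" "0 \<le> y" "0 \<le> z" "0 \<le> u" "0 \<le> M" "0 < Nr"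
    and pf: "x * u \<le> (x + u) / Nr"
  shows "(M * x) * (M * y) * (M * z) * u * z \<le> M ^ 3 / Nr * (x^2 * z^2 + y^2 * z^2 + u^2 * z^2)"
proof -
  have "(x * u) * (y * z ^ 2) \<le> (x + u) / Nr * (y * z ^ 2)"
    by (rule mult_right_mono[OF pf]) (use nn in simp)
  also have "\<dots> = (x * y + u * y) * z ^ 2 / Nr" by (simp add: algebra_simps)
  also have "\<dots> \<le> (x^2 + y^2 + u^2) * z ^ 2 / Nr"
  proof -
    have "x * y + u * y \<le> x^2 + y^2 + u^2" using amgm[of x y] amgm[of u y] zero_le_power2[of x] zero_le_power2[of u] by linarith
    then show ?thesis using nn by (intro divide_right_mono mult_right_mono) auto
  qed
  finally have h: "(x * u) * (y * z ^ 2) \<le> (x^2 + y^2 + u^2) * z ^ 2 / Nr" .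
  have "(M * x) * (M * y) * (M * z) * u * z = M ^ 3 * ((x * u) * (y * z ^ 2))"
    by (simp add: power2_eq_square power3_eq_cube algebra_simps)
  also have "\<dots> \<le> M ^ 3 * ((x^2 + y^2 + u^2) * z ^ 2 / Nr)"
    by (rule mult_left_mono[OF h]) (use nn in simp)
  also have "\<dots> = M ^ 3 / Nr * (x^2 * z^2 + y^2 * z^2 + u^2 * z^2)" by (simp add: algebra_simps add_divide_distrib)
  finally show ?thesis .
qed

lemma R3:
  fixes x y z v M Nr :: real
  assumes nn: "0 \<le> x" "0 \<le> y" "0 \<le> z" "0 \<le> v" "0 \<le> M" "0 < Nr"
    and pf: "z * v \<le> (z + v) / Nr"
  shows "(M * x) * (M * y) * (M * z) * x * v \<le> M ^ 3 / Nr * (x^2 * y^2 + x^2 * z^2 + x^2 * v^2)"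
proof -
  have "(z * v) * (x ^ 2 * y) \<le> (z + v) / Nr * (x ^ 2 * y)"
    by (rule mult_right_mono[OF pf]) (use nn in simp)
  also have "\<dots> = (y * z + y * v) * x ^ 2 / Nr" by (simp add: algebra_simps)
  also have "\<dots> \<le> (y^2 + z^2 + v^2) * x ^ 2 / Nr"
  proof -
    have "y * z + y * v \<le> y^2 + z^2 + v^2" using amgm[of y z] amgm[of y v] zero_le_power2[of z] zero_le_power2[of v] by linarith
    then show ?thesis using nn by (intro divide_right_mono mult_right_mono) auto
  qed
  finally have h: "(z * v) * (x ^ 2 * y) \<le> (y^2 + z^2 + v^2) * x ^ 2 / Nr" .
  have "(M * x) * (M * y) * (M * z) * x * v = M ^ 3 * ((z * v) * (x ^ 2 * y))"
    by (simp add: power2_eq_square power3_eq_cube algebra_simps)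
  also have "\<dots> \<le> M ^ 3 * ((y^2 + z^2 + v^2) * x ^ 2 / Nr)"
    by (rule mult_left_mono[OF h]) (use nn in simp)
  also have "\<dots> = M ^ 3 / Nr * (x^2 * y^2 + x^2 * z^2 + x^2 * v^2)" by (simp add: algebra_simps add_divide_distrib)
  finally show ?thesis .
qed

lemma R4:
  fixes x y z u v M Nr :: real
  assumes nn: "0 \<le> x" "0 \<le> y" "0 \<le> z" "0 \<le> u" "0 \<le> v" "0 \<le> M" "0 < Nr"
    and pf: "x * u \<le> (x + u) / Nr"
  shows "(M * x) * (M * y) * (M * z) * u * v \<le> M ^ 3 / Nr *
     (x^2 * z^2 + y^2 * z^2 + u^2 * z^2 + x^2 * v^2 + y^2 * v^2 + u^2 * v^2)"
proof -
  have "(x * u) * (y * (z * v)) \<le> (x + u) / Nr * (y * (z * v))"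
    by (rule mult_right_mono[OF pf]) (use nn in simp)
  also have "\<dots> = (x * y + u * y) * (z * v) / Nr" by (simp add: algebra_simps)
  also have "\<dots> \<le> (x^2 + y^2 + u^2) * (z^2 + v^2) / Nr"
  proof -
    have a: "x * y + u * y \<le> x^2 + y^2 + u^2" using amgm[of x y] amgm[of u y] zero_le_power2[of x] zero_le_power2[of u] by linarith
    have b: "z * v \<le> z^2 + v^2" using amgm[of z v] zero_le_power2[of z] zero_le_power2[of v] by linarith
    have "(x * y + u * y) * (z * v) \<le> (x^2 + y^2 + u^2) * (z^2 + v^2)"
      by (rule mult_mono[OF a b]) (use nn in auto)
    then show ?thesis using nn by (intro divide_right_mono) auto
  qed
  finally have h: "(x * u) * (y * (z * v)) \<le> (x^2 + y^2 + u^2) * (z^2 + v^2) / Nr" .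
  have "(M * x) * (M * y) * (M * z) * u * v = M ^ 3 * ((x * u) * (y * (z * v)))"
    by (simp add: power3_eq_cube algebra_simps)
  also have "\<dots> \<le> M ^ 3 * ((x^2 + y^2 + u^2) * (z^2 + v^2) / Nr)"
    by (rule mult_left_mono[OF h]) (use nn in simp)
  also have "\<dots> = M ^ 3 / Nr *
     (x^2 * z^2 + y^2 * z^2 + u^2 * z^2 + x^2 * v^2 + y^2 * v^2 + u^2 * v^2)" by (simp add: algebra_simps add_divide_distrib)
  finally show ?thesis .
qed


lemma cosC_even: "cosC q (- k) = cosC q k"
  by (simp add: cosC_def)

lemma C_bound:
  assumes C0: "cosC q 0 = 0"
    and qE: "(\<lambda>n::nat. norm (cosC q (int n))) \<in> O(\<lambda>n. 1 / real n)"
  shows "\<exists>M\<ge>0. \<forall>k. norm (cosC q k) \<le> M * ir k"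
proof -
  obtain c where c: "c > 0" "eventually (\<lambda>n. norm (norm (cosC q (int n))) \<le> c * norm (1 / real n)) at_top"
    using landau_o.bigE[OF qE] by blast
  then obtain N0 where N0: "\<And>n. n \<ge> N0 \<Longrightarrow> norm (cosC q (int n)) \<le> c * (1 / real n)"
    by (auto simp: eventually_at_top_linorder)
  define M where "M = c + (\<Sum>n<N0. norm (cosC q (int n)) * real n)"
  have S: "0 \<le> (\<Sum>n<N0. norm (cosC q (int n)) * real n)" by (intro sum_nonneg) auto
  have Mc: "c \<le> M" using S by (simp add: M_def)
  have bn: "norm (cosC q (int n)) \<le> M * inverse (real n)" for n
  proof (cases "n = 0")
    case True then show ?thesis using C0 by simp
  next
    case False
    show ?thesis
    proof (cases "n \<ge> N0")
      case True
      then have "norm (cosC q (int n)) \<le> c * inverse (real n)" using N0 by (simp add: divide_inverse)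
      also have "\<dots> \<le> M * inverse (real n)" using Mc by (intro mult_right_mono) auto
      finally show ?thesis .
    next
      case F: False
      have "norm (cosC q (int n)) * real n \<le> (\<Sum>n<N0. norm (cosC q (int n)) * real n)"
        using F by (intro member_le_sum) auto
      also have "\<dots> \<le> M" using c by (simp add: M_def)
      finally show ?thesis using False by (simp add: field_simps)
    qed
  qed
  have "norm (cosC q k) \<le> M * ir k" for k
  proof (cases "k \<ge> 0")
    case True
    then have "k = int (nat k)" by simp
    then show ?thesis using bn[of "nat k"] by (metis ir_def abs_of_nat of_int_of_nat_eq)
  next
    case False
    then have e: "k = - int (nat (-k))" by simp
    have "norm (cosC q k) = norm (cosC q (int (nat (-k))))" by (subst e, simp only: cosC_even)
    also have "\<dots> \<le> M * inverse (real (nat (-k)))" by (rule bn)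
    also have "\<dots> = M * ir k" using False by (simp add: ir_def)
    finally show ?thesis .
  qed
  then show ?thesis using Mc c by (intro exI[of _ M]) auto
qed


lemma bijI2: "(\<And>p. g (f p) = p) \<Longrightarrow> (\<And>p. f (g p) = p) \<Longrightarrow> bij f"
  by (rule o_bij[where g = g]) (auto simp: fun_eq_iff)

lemma mono5:
  fixes a b c a' b' c' u z :: real
  assumes "0 \<le> a" "a \<le> a'" "0 \<le> b" "b \<le> b'" "0 \<le> c" "c \<le> c'" "0 \<le> u" "0 \<le> z"
  shows "a * b * c * u * z \<le> a' * b' * c' * u * z"
proof -
  have "a * b \<le> a' * b'" using assms by (intro mult_mono) auto
  then have "a * b * c \<le> a' * b' * c'" using assms by (intro mult_mono) auto
  then show ?thesis using assms by (intro mult_right_mono) auto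
qed

lemma ir_mkl: "ir (- k - l) = ir (k + l)"
  by (metis ir_uminus minus_add_distrib diff_conv_add_uminus)

lemma T2_bound:
  assumes M: "0 \<le> M" "\<And>k. norm (cosC q k) \<le> M * ir k" and n: "n > 0"
  shows "norm (S2_term q n p) \<le> M ^ 3 / real (2 * n) *
    (\<Sum>\<phi>\<leftarrow>[\<lambda>(k, l). (k, k + l), \<lambda>(k, l). (l, k + l), \<lambda>(k, l). (2 * int n + k, k + l)]. pw \<phi> p)"
proof -
  obtain k l where p: "p = (k, l)" by fastforce
  have e: "norm (S2_term q n (k, l)) = norm (cosC q k) * norm (cosC q l) * norm (cosC q (- k - l))
      * ir (2 * int n + k) * ir (k + l)"
    by (simp only: S2_term_def prod.case norm_div_int norm_mult)
  also have "\<dots> \<le> (M * ir k) * (M * ir l) * (M * ir (k + l)) * ir (2 * int n + k) * ir (k + l)"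
    using M(2)[of k] M(2)[of l] M(2)[of "-k-l"] by (intro mono5) (auto simp: ir_mkl)
  also have "\<dots> \<le> M ^ 3 / real_of_int (2 * int n) * (ir k ^ 2 * ir (k + l) ^ 2 + ir l ^ 2 * ir (k + l) ^ 2
      + ir (2 * int n + k) ^ 2 * ir (k + l) ^ 2)"
    by (rule R2) (use M n ir_pf[of "2 * int n" k] in auto)
  finally show ?thesis by (simp add: p pw_def add.assoc)
qed

lemma T3_bound:
  assumes M: "0 \<le> M" "\<And>k. norm (cosC q k) \<le> M * ir k" and n: "n > 0"
  shows "norm (S3_term q n p) \<le> M ^ 3 / real (2 * n) *
    (\<Sum>\<phi>\<leftarrow>[\<lambda>(k, l). (k, l), \<lambda>(k, l). (k, k + l), \<lambda>(k, l). (k, 2 * int n + (k + l))]. pw \<phi> p)"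
proof -
  obtain k l where p: "p = (k, l)" by fastforce
  have e: "norm (S3_term q n (k, l)) = norm (cosC q k) * norm (cosC q l) * norm (cosC q (- k - l))
      * ir k * ir (2 * int n + k + l)"
    by (simp only: S3_term_def prod.case norm_div_int norm_mult)
  also have "\<dots> = norm (cosC q k) * norm (cosC q l) * norm (cosC q (- k - l))
      * ir k * ir (2 * int n + (k + l))" by (simp add: add.assoc)
  also have "\<dots> \<le> (M * ir k) * (M * ir l) * (M * ir (k + l)) * ir k * ir (2 * int n + (k + l))"
    using M(2)[of k] M(2)[of l] M(2)[of "-k-l"] by (intro mono5) (auto simp: ir_mkl)
  also have "\<dots> \<le> M ^ 3 / real_of_int (2 * int n) * (ir k ^ 2 * ir l ^ 2 + ir k ^ 2 * ir (k + l) ^ 2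
      + ir k ^ 2 * ir (2 * int n + (k + l)) ^ 2)"
    by (rule R3) (use M n ir_pf[of "2 * int n" "k + l"] in auto)
  finally show ?thesis by (simp add: p pw_def add.assoc)
qed

lemma T4_bound:
  assumes M: "0 \<le> M" "\<And>k. norm (cosC q k) \<le> M * ir k" and n: "n > 0"
  shows "norm (S4_term q n p) \<le> M ^ 3 / real (2 * n) *
    (\<Sum>\<phi>\<leftarrow>[\<lambda>(k, l). (k, k + l), \<lambda>(k, l). (l, k + l), \<lambda>(k, l). (2 * int n + k, k + l),
       \<lambda>(k, l). (k, 2 * int n + (k + l)), \<lambda>(k, l). (l, 2 * int n + (k + l)),
       \<lambda>(k, l). (2 * int n + k, 2 * int n + (k + l))]. pw \<phi> p)"
proof -
  obtain k l where p: "p = (k, l)" by fastforce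
  have e: "norm (S4_term q n (k, l)) = norm (cosC q k) * norm (cosC q l) * norm (cosC q (- k - l))
      * ir (2 * int n + k) * ir (2 * int n + k + l)"
    by (simp only: S4_term_def prod.case norm_div_int norm_mult)
  also have "\<dots> = norm (cosC q k) * norm (cosC q l) * norm (cosC q (- k - l))
      * ir (2 * int n + k) * ir (2 * int n + (k + l))" by (simp add: add.assoc)
  also have "\<dots> \<le> (M * ir k) * (M * ir l) * (M * ir (k + l)) * ir (2 * int n + k) * ir (2 * int n + (k + l))"
    using M(2)[of k] M(2)[of l] M(2)[of "-k-l"] by (intro mono5) (auto simp: ir_mkl)
  also have "\<dots> \<le> M ^ 3 / real_of_int (2 * int n) *
     (ir k ^ 2 * ir (k + l) ^ 2 + ir l ^ 2 * ir (k + l) ^ 2 + ir (2 * int n + k) ^ 2 * ir (k + l) ^ 2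
      + ir k ^ 2 * ir (2 * int n + (k + l)) ^ 2 + ir l ^ 2 * ir (2 * int n + (k + l)) ^ 2
      + ir (2 * int n + k) ^ 2 * ir (2 * int n + (k + l)) ^ 2)"
    by (rule R4) (use M n ir_pf[of "2 * int n" k] in auto)
  finally show ?thesis by (simp add: p pw_def add.assoc)
qed

lemma bigo_from:
  assumes "\<And>n. n > 0 \<Longrightarrow> norm (f n :: complex) \<le> K * (1 / real n)"
  shows "(\<lambda>n. norm (f n)) \<in> O(\<lambda>n. 1 / real n)"
proof (rule bigoI[where c = K])
  show "eventually (\<lambda>n. norm (norm (f n)) \<le> K * norm (1 / real n)) at_top"
    using eventually_gt_at_top[of "0::nat"] by eventually_elim (use assms in auto)
qed

theorem lemma3:
  fixes q :: "real \<Rightarrow> complex"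
  assumes q_L1: "q absolutely_integrable_on {0..pi}"
    and C0: "cosC q 0 = 0"
    and qE: "(\<lambda>n::nat. norm (cosC q (int n))) \<in> O(\<lambda>n. 1 / real n)"
  shows "(\<forall>n>0. S2_term q n summable_on Sidx n \<and> S3_term q n summable_on Sidx n
                \<and> S4_term q n summable_on Sidx n)
         \<and> (\<lambda>n. norm (S2 q n)) \<in> O(\<lambda>n. 1 / real n)
         \<and> (\<lambda>n. norm (S3 q n)) \<in> O(\<lambda>n. 1 / real n)
         \<and> (\<lambda>n. norm (S4 q n)) \<in> O(\<lambda>n. 1 / real n)"
proof -
  obtain M where M: "0 \<le> M" "\<And>k. norm (cosC q k) \<le> M * ir k"
    using C_bound[OF C0 qE] by blast
  define P0 where "P0 = infsum (\<lambda>(a, b). ir a ^ 2 * ir b ^ 2) (UNIV :: (int \<times> int) set)"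
  have cn: "M ^ 3 / real (2 * n) * (L * P0) = (M ^ 3 * L * P0 / 2) * (1 / real n)" for n and L :: real
    by (simp add: field_simps)
  have r2: "S2_term q n summable_on Sidx n \<and> norm (S2 q n) \<le> (M ^ 3 * 3 * P0 / 2) * (1 / real n)"
    if n: "n > 0" for n
  proof -
    let ?L = "[\<lambda>(k, l). (k, k + l), \<lambda>(k, l). (l, k + l), \<lambda>(k, l). (2 * int n + k, k + l)]"
    have b1: "bij (\<lambda>(k::int, l::int). (k, k + l))" by (rule bijI2[where g = "\<lambda>(a, b). (a, b - a)"]) (auto split: prod.splits)
    have b2: "bij (\<lambda>(k::int, l::int). (l, k + l))" by (rule bijI2[where g = "\<lambda>(a, b). (b - a, a)"]) (auto split: prod.splits)
    have b3: "bij (\<lambda>(k, l). (2 * int n + k, k + l))"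
      by (rule bijI2[where g = "\<lambda>(a, b). (a - 2 * int n, b - a + 2 * int n)"]) (auto split: prod.splits)
    have b: "\<forall>\<phi>\<in>set ?L. bij \<phi>" using b1 b2 b3 by simp
    note pl = pw_list[OF b]
    have "S2_term q n summable_on Sidx n \<and> norm (infsum (S2_term q n) (Sidx n))
       \<le> M ^ 3 / real (2 * n) * infsum (\<lambda>p. \<Sum>\<phi>\<leftarrow>?L. pw \<phi> p) UNIV"
      by (rule gen_bound) (use T2_bound[OF M n] pl M in \<open>auto intro!: sum_list_nonneg simp: pw_nonneg\<close>)
    note h = this
    have Gi: "infsum (\<lambda>p. \<Sum>\<phi>\<leftarrow>?L. pw \<phi> p) UNIV = 3 * P0"
      using conjunct2[OF pl] unfolding P0_def by simp
    from h have "S2_term q n summable_on Sidx n \<and> norm (S2 q n) \<le> M ^ 3 / real (2 * n) * (3 * P0)"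
      by (simp only: Gi S2_def)
    then show ?thesis by (simp only: cn)
  qed
  have r3: "S3_term q n summable_on Sidx n \<and> norm (S3 q n) \<le> (M ^ 3 * 3 * P0 / 2) * (1 / real n)"
    if n: "n > 0" for n
  proof -
    let ?L = "[\<lambda>(k, l). (k, l), \<lambda>(k, l). (k, k + l), \<lambda>(k, l). (k, 2 * int n + (k + l))]"
    have b1: "bij (\<lambda>(k::int, l::int). (k, l))" by (rule bijI2[where g = "\<lambda>(a, b). (a, b)"]) (auto split: prod.splits)
    have b2: "bij (\<lambda>(k::int, l::int). (k, k + l))" by (rule bijI2[where g = "\<lambda>(a, b). (a, b - a)"]) (auto split: prod.splits)
    have b3: "bij (\<lambda>(k, l). (k, 2 * int n + (k + l)))"
      by (rule bijI2[where g = "\<lambda>(a, b). (a, b - a - 2 * int n)"]) (auto split: prod.splits)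
    have b: "\<forall>\<phi>\<in>set ?L. bij \<phi>" using b1 b2 b3 by simp
    note pl = pw_list[OF b]
    have "S3_term q n summable_on Sidx n \<and> norm (infsum (S3_term q n) (Sidx n))
       \<le> M ^ 3 / real (2 * n) * infsum (\<lambda>p. \<Sum>\<phi>\<leftarrow>?L. pw \<phi> p) UNIV"
      by (rule gen_bound) (use T3_bound[OF M n] pl M in \<open>auto intro!: sum_list_nonneg simp: pw_nonneg\<close>)
    note h = this
    have Gi: "infsum (\<lambda>p. \<Sum>\<phi>\<leftarrow>?L. pw \<phi> p) UNIV = 3 * P0"
      using conjunct2[OF pl] unfolding P0_def by simp
    from h have "S3_term q n summable_on Sidx n \<and> norm (S3 q n) \<le> M ^ 3 / real (2 * n) * (3 * P0)"
      by (simp only: Gi S3_def)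
    then show ?thesis by (simp only: cn)
  qed
  have r4: "S4_term q n summable_on Sidx n \<and> norm (S4 q n) \<le> (M ^ 3 * 6 * P0 / 2) * (1 / real n)"
    if n: "n > 0" for n
  proof -
    let ?L = "[\<lambda>(k, l). (k, k + l), \<lambda>(k, l). (l, k + l), \<lambda>(k, l). (2 * int n + k, k + l),
       \<lambda>(k, l). (k, 2 * int n + (k + l)), \<lambda>(k, l). (l, 2 * int n + (k + l)),
       \<lambda>(k, l). (2 * int n + k, 2 * int n + (k + l))]"
    have b1: "bij (\<lambda>(k::int, l::int). (k, k + l))" by (rule bijI2[where g = "\<lambda>(a, b). (a, b - a)"]) (auto split: prod.splits)
    have b2: "bij (\<lambda>(k::int, l::int). (l, k + l))" by (rule bijI2[where g = "\<lambda>(a, b). (b - a, a)"]) (auto split: prod.splits)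
    have b3: "bij (\<lambda>(k, l). (2 * int n + k, k + l))"
      by (rule bijI2[where g = "\<lambda>(a, b). (a - 2 * int n, b - a + 2 * int n)"]) (auto split: prod.splits)
    have b4: "bij (\<lambda>(k, l). (k, 2 * int n + (k + l)))"
      by (rule bijI2[where g = "\<lambda>(a, b). (a, b - a - 2 * int n)"]) (auto split: prod.splits)
    have b5: "bij (\<lambda>(k, l). (l, 2 * int n + (k + l)))"
      by (rule bijI2[where g = "\<lambda>(a, b). (b - a - 2 * int n, a)"]) (auto split: prod.splits)
    have b6: "bij (\<lambda>(k, l). (2 * int n + k, 2 * int n + (k + l)))"
      by (rule bijI2[where g = "\<lambda>(a, b). (a - 2 * int n, b - a)"]) (auto split: prod.splits)
    have b: "\<forall>\<phi>\<in>set ?L. bij \<phi>" using b1 b2 b3 b4 b5 b6 by simp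
    note pl = pw_list[OF b]
    have "S4_term q n summable_on Sidx n \<and> norm (infsum (S4_term q n) (Sidx n))
       \<le> M ^ 3 / real (2 * n) * infsum (\<lambda>p. \<Sum>\<phi>\<leftarrow>?L. pw \<phi> p) UNIV"
      by (rule gen_bound) (use T4_bound[OF M n] pl M in \<open>auto intro!: sum_list_nonneg simp: pw_nonneg\<close>)
    note h = this
    have Gi: "infsum (\<lambda>p. \<Sum>\<phi>\<leftarrow>?L. pw \<phi> p) UNIV = 6 * P0"
      using conjunct2[OF pl] unfolding P0_def by simp
    from h have "S4_term q n summable_on Sidx n \<and> norm (S4 q n) \<le> M ^ 3 / real (2 * n) * (6 * P0)"
      by (simp only: Gi S4_def)
    then show ?thesis by (simp only: cn)
  qed
  have o2: "(\<lambda>n. norm (S2 q n)) \<in> O(\<lambda>n. 1 / real n)"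
    by (rule bigo_from[where K = "M ^ 3 * 3 * P0 / 2"]) (use r2 in blast)
  have o3: "(\<lambda>n. norm (S3 q n)) \<in> O(\<lambda>n. 1 / real n)"
    by (rule bigo_from[where K = "M ^ 3 * 3 * P0 / 2"]) (use r3 in blast)
  have o4: "(\<lambda>n. norm (S4 q n)) \<in> O(\<lambda>n. 1 / real n)"
    by (rule bigo_from[where K = "M ^ 3 * 6 * P0 / 2"]) (use r4 in blast)
  show ?thesis using r2 r3 r4 o2 o3 o4 by blast
qed

end
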